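(* Let $(\Omega,\mathcal F,P)$ be a probability space, $\xi:\Omega\to\mathbb{R}^l$ a random vector with support $\Xi$ and distribution $P$, $\mathcal Y$ the space of measurable functions on $\Xi$, $A\in\mathbb{R}^{n\times n}$, $q_1\in\mathbb{R}^n$, and $B:\mathbb{R}^l\to\mathbb{R}^{n\times m}$, $M:\mathbb{R}^l\to\mathbb{R}^{m\times m}$, $N:\mathbb{R}^l\to\mathbb{R}^{m\times n}$, $q_2:\mathbb{R}^l\to\mathbb{R}^m$ continuous. Suppose there is a positive continuous function $\kappa$ with $\mathbb{E}[\kappa(\xi)]<+\infty$ such that for almost every $\xi$, $\begin{pmatrix} z^T & u^T\end{pmatrix}\begin{pmatrix} A & B(\xi)\\ N(\xi) & M(\xi)\end{pmatrix}\begin{pmatrix} z\\ u\end{pmatrix}\ge\kappa(\xi)(\|z\|^2+\|u\|^2)$ for all $z,u$. Let $x^*$ be the first-stage component of the (unique) solution of the two-stage SLCP $$0\le x\perp Ax+\mathbb{E}[B(\xi)y(\xi)]+q_1\ge 0,\qquad 0\le y(\xi)\perp M(\xi)y(\xi)+N(\xi)x+q_2(\xi)\ge0\ \text{ for a.e. }\xi\in\Xi.$$ For $\epsilon>0$ let $\Xi_\epsilon\subset\Xi$ be a compact set such that, for every index selection $\xi\mapsto J(\xi)$, $$\Big\|\int_{\Xi\setminus\Xi_\epsilon}B(\xi)U_{J(\xi)}(M(\xi))N(\xi)P(d\xi)\Big\|\le\epsilon,\qquad \Big\|\int_{\Xi\setminus\Xi_\epsilon}B(\xi)U_{J(\xi)}(M(\xi))q_2(\xi)P(d\xi)\Big\|\le\epsilon,$$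 and consider the truncated problem $$0\le x\perp Ax+\mathbb{E}_{\Xi_\epsilon}[B(\xi)y(\xi)]+q_1\ge 0,\qquad 0\le y(\xi)\perp M(\xi)y(\xi)+N(\xi)x+q_2(\xi)\ge0\ \text{ for a.e. }\xi\in\Xi_\epsilon,$$ where $\mathbb{E}_{\Xi_\epsilon}[H(\xi)]:=\int_{\Xi_\epsilon}H(\xi)P(d\xi)$. Then there is $\epsilon_0>0$ such that for every $\epsilon\in(0,\epsilon_0]$ the truncated problem has a unique solution with first-stage component $x_\epsilon$, and there is a constant $C>0$ with $\|x^*-x_\epsilon\|\le C\epsilon$ for all $\epsilon\in(0,\epsilon_0]$.
   Context: For $J\subseteq\{1,\dots,m\}$, $D_J$ is the $m\times m$ diagonal 0/1 matrix with $(D_J)_{jj}=1$ iff $j\in J$, and for $M$ with $z^TMz>0$ for $z\ne0$, $U_J(M):=(I-D_J(I-M))^{-1}D_J$ (equal to $M_J^{-1}$ padded with zeros on the block indexed by $J$, and $0$ if $J=\emptyset$). $\|\cdot\|$ is the Euclidean / induced 2-norm. *)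

theory Defs
  imports "HOL-Probability.Probability"
begin

definition nonneg_vec :: "real^'k \<Rightarrow> bool" where
  "nonneg_vec v \<longleftrightarrow> (\<forall>i. 0 \<le> v $ i)"

definition mat_norm2 :: "real^'a^'b \<Rightarrow> real" where
  "mat_norm2 X = onorm (\<lambda>v. X *v v)"

definition diagJ :: "'m set \<Rightarrow> real^'m^'m" where
  "diagJ J = (\<chi> i j. if i = j \<and> i \<in> J then 1 else 0)"

definition UJ :: "'m set \<Rightarrow> real^'m^'m \<Rightarrow> real^'m^'m" where
  "UJ J X = matrix_inv (mat 1 - diagJ J ** (mat 1 - X)) ** diagJ J"

definition msupport :: "'a::topological_space measure \<Rightarrow> 'a set" where
  "msupport P = {x. \<forall>U. open U \<and> x \<in> U \<longrightarrow> emeasure P U > 0}"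

definition slcp_sol ::
  "'l::euclidean_space measure \<Rightarrow> 'l set \<Rightarrow> real^'n^'n \<Rightarrow> ('l \<Rightarrow> real^'m^'n) \<Rightarrow>
   ('l \<Rightarrow> real^'m^'m) \<Rightarrow> ('l \<Rightarrow> real^'n^'m) \<Rightarrow> real^'n \<Rightarrow> ('l \<Rightarrow> real^'m) \<Rightarrow>
   real^'n \<Rightarrow> ('l \<Rightarrow> real^'m) \<Rightarrow> bool" where
  "slcp_sol P S A B M N q1 q2 x y \<longleftrightarrow>
     y \<in> borel_measurable P \<and>
     set_integrable P S (\<lambda>\<xi>. B \<xi> *v y \<xi>) \<and>
     nonneg_vec x \<and>
     nonneg_vec (A *v x + (LINT \<xi>:S|P. B \<xi> *v y \<xi>) + q1) \<and>
     x \<bullet> (A *v x + (LINT \<xi>:S|P. B \<xi> *v y \<xi>) + q1) = 0 \<and>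
     (AE \<xi> in P. \<xi> \<in> S \<longrightarrow>
        nonneg_vec (y \<xi>) \<and>
        nonneg_vec (M \<xi> *v y \<xi> + N \<xi> *v x + q2 \<xi>) \<and>
        y \<xi> \<bullet> (M \<xi> *v y \<xi> + N \<xi> *v x + q2 \<xi>) = 0)"

end

theory Submission
  imports Defs
begin


definition lcpv :: "real^'k \<Rightarrow> real^'k \<Rightarrow> bool" where
  "lcpv x f \<longleftrightarrow> nonneg_vec x \<and> nonneg_vec f \<and> x \<bullet> f = 0"

lemma nonneg_inner: "nonneg_vec a \<Longrightarrow> nonneg_vec b \<Longrightarrow> 0 \<le> a \<bullet> (b::real^'k)"
  unfolding nonneg_vec_def inner_vec_def by (auto intro!: sum_nonneg)

lemma lcpv_ineq: "lcpv x f \<Longrightarrow> lcpv x' f' \<Longrightarrow> (x - x') \<bullet> (f - f') \<le> 0"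
proof -
  assume a: "lcpv x f" "lcpv x' f'"
  have "0 \<le> x \<bullet> f'" "0 \<le> x' \<bullet> f" using a nonneg_inner unfolding lcpv_def by blast+
  moreover have "(x - x') \<bullet> (f - f') = x \<bullet> f - x \<bullet> f' - x' \<bullet> f + x' \<bullet> f'"
    by (simp add: inner_diff_left inner_diff_right)
  ultimately show ?thesis using a unfolding lcpv_def by simp
qed

lemma lcpv_comp: "lcpv x f \<Longrightarrow> x $ i = 0 \<or> f $ i = 0"
proof -
  assume a: "lcpv x f"
  have "(\<Sum>j\<in>UNIV. x $ j * f $ j) = 0" using a unfolding lcpv_def inner_vec_def by simp
  moreover have "\<forall>j\<in>UNIV. 0 \<le> x $ j * f $ j" using a unfolding lcpv_def nonneg_vec_def by auto
  ultimately have "x $ i * f $ i = 0" using sum_nonneg_eq_0_iff[of UNIV "\<lambda>j. x $ j * f $ j"] by auto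
  then show ?thesis by simp
qed

definition proj0 :: "real^'k \<Rightarrow> real^'k" where
  "proj0 v = (\<chi> i. max 0 (v $ i))"

lemma proj0_fix:
  assumes g: "0 < g" and fx: "proj0 (x - g *\<^sub>R f) = x"
  shows "lcpv x f"
proof -
  have c: "x $ i = max 0 (x $ i - g * f $ i)" for i
  proof -
    have "proj0 (x - g *\<^sub>R f) $ i = x $ i" using fx by simp
    then show ?thesis by (simp add: proj0_def)
  qed
  have x0: "0 \<le> x $ i" for i using c[of i] by linarith
  have f0: "0 \<le> f $ i" for i
  proof (cases "x $ i = 0")
    case True then have "max 0 (- (g * f $ i)) = 0" using c[of i] by simp
    then have "0 \<le> g * f $ i" by linarith
    then show ?thesis using g by (simp add: zero_le_mult_iff)
  next
    case False then have "x $ i = x $ i - g * f $ i" using c[of i] x0[of i] by linarith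
    then show ?thesis using g by simp
  qed
  have xf: "x $ i * f $ i = 0" for i
  proof (cases "x $ i = 0")
    case False then have "x $ i = x $ i - g * f $ i" using c[of i] x0[of i] by linarith
    then show ?thesis using g by simp
  qed simp
  have "x \<bullet> f = (\<Sum>i\<in>UNIV. x $ i * f $ i)" unfolding inner_vec_def by simp
  also have "\<dots> = 0" by (rule sum.neutral) (use xf in blast)
  finally have "x \<bullet> f = 0" .
  then show ?thesis unfolding lcpv_def nonneg_vec_def using x0 f0 by auto
qed

lemma proj0_nonexp: "norm (proj0 u - proj0 v) \<le> norm (u - v)"
  unfolding proj0_def by (rule norm_le_componentwise_cart) (auto simp: abs_le_iff)

lemma sqlem: "(norm (d - g *\<^sub>R e))\<^sup>2 = (norm d)\<^sup>2 - 2 * g * (d \<bullet> e) + g\<^sup>2 * (norm (e::real^'k))\<^sup>2"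
proof -
  have "(norm (d - g *\<^sub>R e))\<^sup>2 = (d - g *\<^sub>R e) \<bullet> (d - g *\<^sub>R e)" by (rule power2_norm_eq_inner)
  also have "\<dots> = d \<bullet> d - 2 * g * (d \<bullet> e) + g\<^sup>2 * (e \<bullet> e)"
    by (simp add: inner_diff_left inner_diff_right inner_commute[of e d] power2_eq_square algebra_simps)
  finally show ?thesis by (simp add: power2_norm_eq_inner)
qed
lemma lcp_exists:
  fixes F :: "real^'k \<Rightarrow> real^'k"
  assumes c: "0 < c" and mon: "\<And>x y. c * (norm (x - y))\<^sup>2 \<le> (x - y) \<bullet> (F x - F y)"
    and lip: "\<And>x y. norm (F x - F y) \<le> L * norm (x - y)"
  shows "\<exists>x. lcpv x (F x)"
proof -
  define g where "g = c / (L\<^sup>2 + 2 * c\<^sup>2)"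
  have c2: "0 < c\<^sup>2" using c by simp
  have Lc: "0 < L\<^sup>2 + 2 * c\<^sup>2" using c2 by (simp add: add_nonneg_pos)
  have g0: "0 < g" using c Lc by (simp add: g_def)
  have gL: "g * L\<^sup>2 \<le> c"
  proof -
    have "g * L\<^sup>2 = c * (L\<^sup>2 / (L\<^sup>2 + 2 * c\<^sup>2))" by (simp add: g_def)
    also have "\<dots> \<le> c * 1" using c Lc c2 by (intro mult_left_mono) auto
    finally show ?thesis by simp
  qed
  have gc: "g * c < 1"
  proof -
    have "g * c = c\<^sup>2 / (L\<^sup>2 + 2 * c\<^sup>2)" by (simp add: g_def power2_eq_square)
    also have "\<dots> < 1"
    proof -
      have "c\<^sup>2 < L\<^sup>2 + 2 * c\<^sup>2" using c2 zero_le_power2[of L] by linarith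
      then show ?thesis using Lc by simp
    qed
    finally show ?thesis .
  qed
  define T where "T x = proj0 (x - g *\<^sub>R F x)" for x
  have contr: "dist (T x) (T y) \<le> sqrt (1 - g * c) * dist x y" for x y
  proof -
    define d where "d = x - y"
    define e where "e = F x - F y"
    have "(x - g *\<^sub>R F x) - (y - g *\<^sub>R F y) = d - g *\<^sub>R e"
      by (simp add: d_def e_def algebra_simps)
    then have n1: "norm (T x - T y) \<le> norm (d - g *\<^sub>R e)"
      unfolding T_def by (metis proj0_nonexp)
    have sq: "(norm (d - g *\<^sub>R e))\<^sup>2 = (norm d)\<^sup>2 - 2 * g * (d \<bullet> e) + g\<^sup>2 * (norm e)\<^sup>2"
      by (rule sqlem)
    have "norm e \<le> L * norm d" using lip[of x y] by (simp add: d_def e_def)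
    then have "(norm e)\<^sup>2 \<le> (L * norm d)\<^sup>2" by (intro power_mono) auto
    then have "g\<^sup>2 * (norm e)\<^sup>2 \<le> g\<^sup>2 * (L * norm d)\<^sup>2"
      by (rule mult_left_mono) simp
    also have "g\<^sup>2 * (L * norm d)\<^sup>2 = g * (g * L\<^sup>2) * (norm d)\<^sup>2"
      by (simp add: power_mult_distrib power2_eq_square)
    finally have h1: "g\<^sup>2 * (norm e)\<^sup>2 \<le> g * (g * L\<^sup>2) * (norm d)\<^sup>2" .
    have h2: "g * (g * L\<^sup>2) * (norm d)\<^sup>2 \<le> g * c * (norm d)\<^sup>2"
      using gL g0 by (intro mult_right_mono mult_left_mono) auto
    have h3: "2 * g * (c * (norm d)\<^sup>2) \<le> 2 * g * (d \<bullet> e)" using mon[of x y] g0 by (simp add: d_def e_def)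
    have "(norm (T x - T y))\<^sup>2 \<le> (norm (d - g *\<^sub>R e))\<^sup>2" using n1 by (intro power_mono) auto
    also have "\<dots> \<le> (norm d)\<^sup>2 - 2 * g * (c * (norm d)\<^sup>2) + g * c * (norm d)\<^sup>2"
      using sq h1 h2 h3 by linarith
    also have "\<dots> = (1 - g * c) * (norm d)\<^sup>2"
      by (simp add: algebra_simps)
    also have "\<dots> = (sqrt (1 - g * c) * norm d)\<^sup>2"
      using gc by (simp add: power_mult_distrib)
    finally have "(norm (T x - T y))\<^sup>2 \<le> (sqrt (1 - g * c) * norm d)\<^sup>2" .
    then have "norm (T x - T y) \<le> sqrt (1 - g * c) * norm d"
      by (rule power2_le_imp_le) (use gc in auto)
    then show ?thesis unfolding dist_norm d_def .
  qed
  have s0: "0 \<le> sqrt (1 - g * c)" using gc by simp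
  have "0 < g * c" using g0 c by simp
  then have "sqrt (1 - g * c) < sqrt 1" using gc by (intro real_sqrt_less_mono) linarith
  then have s1: "sqrt (1 - g * c) < 1" by simp
  have "\<exists>!x. T x = x"
    by (rule banach_fix_type[OF s0 s1 allI[OF allI[OF contr]]])
  then obtain x where "T x = x" by blast
  then have "proj0 (x - g *\<^sub>R F x) = x" by (simp add: T_def)
  then have "lcpv x (F x)" by (rule proj0_fix[OF g0])
  then show ?thesis ..
qed

lemma lcp_unique:
  fixes F :: "real^'k \<Rightarrow> real^'k"
  assumes c: "0 < c" and mon: "c * (norm (x - y))\<^sup>2 \<le> (x - y) \<bullet> (F x - F y)"
    and "lcpv x (F x)" "lcpv y (F y)"
  shows "x = y"
proof (rule ccontr)
  assume "x \<noteq> y"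
  then have "0 < c * (norm (x - y))\<^sup>2" using c by simp
  then show False using lcpv_ineq[OF assms(3,4)] mon by linarith
qed



definition lcp2 :: "real^'m^'m \<Rightarrow> real^'m \<Rightarrow> real^'m \<Rightarrow> bool" where
  "lcp2 M0 w y \<longleftrightarrow> lcpv y (M0 *v y + w)"

definition pdm :: "real \<Rightarrow> real^'m^'m \<Rightarrow> bool" where
  "pdm k M0 \<longleftrightarrow> (\<forall>u. k * (norm u)\<^sup>2 \<le> u \<bullet> (M0 *v u))"

definition mn :: "real^'a^'b \<Rightarrow> real" where
  "mn X = (\<Sum>i\<in>UNIV. \<Sum>j\<in>UNIV. \<bar>X $ i $ j\<bar>)"

definition sol2 :: "real^'m^'m \<Rightarrow> real^'m \<Rightarrow> real^'m" where
  "sol2 M0 w = (THE y. lcp2 M0 w y)"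

lemma mn_nonneg: "0 \<le> mn X"
  unfolding mn_def by (intro sum_nonneg) auto

lemma norm_mv_le: "norm (X *v v) \<le> mn X * norm (v::real^'a)"
proof -
  have "norm (X *v v) \<le> (\<Sum>i\<in>UNIV. \<bar>(X *v v) $ i\<bar>)" by (rule norm_le_l1_cart)
  also have "\<dots> \<le> (\<Sum>i\<in>UNIV. (\<Sum>j\<in>UNIV. \<bar>X $ i $ j\<bar>) * norm v)"
  proof (rule sum_mono)
    fix i
    have "\<bar>(X *v v) $ i\<bar> = \<bar>\<Sum>j\<in>UNIV. X $ i $ j * v $ j\<bar>" by (simp add: matrix_vector_mult_def)
    also have "\<dots> \<le> (\<Sum>j\<in>UNIV. \<bar>X $ i $ j * v $ j\<bar>)" by (rule sum_abs)
    also have "\<dots> \<le> (\<Sum>j\<in>UNIV. \<bar>X $ i $ j\<bar> * norm v)"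
      by (intro sum_mono) (simp add: abs_mult mult_left_mono component_le_norm_cart)
    also have "\<dots> = (\<Sum>j\<in>UNIV. \<bar>X $ i $ j\<bar>) * norm v" by (simp add: sum_distrib_right)
    finally show "\<bar>(X *v v) $ i\<bar> \<le> (\<Sum>j\<in>UNIV. \<bar>X $ i $ j\<bar>) * norm v" .
  qed
  also have "\<dots> = mn X * norm v" unfolding mn_def by (simp add: sum_distrib_right)
  finally show ?thesis .
qed

lemma lcp2_exists_unique:
  assumes k: "0 < k" and pd: "pdm k M0"
  shows "\<exists>!y. lcp2 M0 w y"
proof -
  have mon: "k * (norm (x - y))\<^sup>2 \<le> (x - y) \<bullet> ((M0 *v x + w) - (M0 *v y + w))" for x y
    using pd unfolding pdm_def by (simp add: matrix_vector_mult_diff_distrib[symmetric])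
  have lip: "norm ((M0 *v x + w) - (M0 *v y + w)) \<le> mn M0 * norm (x - y)" for x y
    using norm_mv_le[of M0 "x - y"] by (simp add: matrix_vector_mult_diff_distrib)
  obtain y where "lcpv y (M0 *v y + w)"
    using lcp_exists[where F="\<lambda>y. M0 *v y + w", OF k mon lip] by blast
  moreover have "y1 = y2" if "lcpv y1 (M0 *v y1 + w)" "lcpv y2 (M0 *v y2 + w)" for y1 y2
    using lcp_unique[where F="\<lambda>y. M0 *v y + w", OF k mon that] .
  ultimately show ?thesis unfolding lcp2_def by blast
qed

lemma sol2_lcp: "0 < k \<Longrightarrow> pdm k M0 \<Longrightarrow> lcp2 M0 w (sol2 M0 w)"
  unfolding sol2_def by (rule theI') (rule lcp2_exists_unique)

lemma sol2_unique: "0 < k \<Longrightarrow> pdm k M0 \<Longrightarrow> lcp2 M0 w y \<Longrightarrow> y = sol2 M0 w"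
  using lcp2_exists_unique sol2_lcp by blast

lemma lcp2_perturb:
  assumes k: "0 < k" and pd: "pdm k M1" and l1: "lcp2 M1 w1 y" and l2: "lcp2 M2 w2 y'"
  shows "k * norm (y - y') \<le> mn (M1 - M2) * norm y' + norm (w1 - w2)"
proof -
  define d where "d = y - y'"
  define r where "r = (M1 - M2) *v y' + (w1 - w2)"
  have eq: "(M1 *v y + w1) - (M2 *v y' + w2) = M1 *v d + r"
    by (simp add: d_def r_def matrix_vector_mult_diff_distrib matrix_vector_mult_diff_rdistrib algebra_simps)
  have "d \<bullet> ((M1 *v y + w1) - (M2 *v y' + w2)) \<le> 0"
    unfolding d_def by (rule lcpv_ineq[OF l1[unfolded lcp2_def] l2[unfolded lcp2_def]])
  then have "d \<bullet> (M1 *v d + r) \<le> 0" by (simp only: eq)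
  then have "k * (norm d)\<^sup>2 \<le> - (d \<bullet> r)" using pd unfolding pdm_def
    by (smt (verit) inner_add_right)
  also have "\<dots> \<le> norm d * norm r" using Cauchy_Schwarz_ineq2[of d r] by (simp add: abs_le_iff norm_minus_cancel)
  also have "norm r \<le> mn (M1 - M2) * norm y' + norm (w1 - w2)"
    unfolding r_def using norm_mv_le[of "M1 - M2" y'] norm_triangle_ineq[of "(M1 - M2) *v y'" "w1 - w2"] by linarith
  finally have h: "k * (norm d)\<^sup>2 \<le> norm d * (mn (M1 - M2) * norm y' + norm (w1 - w2))"
    by (simp add: mult_left_mono)
  show ?thesis
  proof (cases "d = 0")
    case True then show ?thesis unfolding d_def using mn_nonneg[of "M1 - M2"] by simp
  next
    case False
    then have "0 < norm d" by simp
    moreover have "norm d * (k * norm d) \<le> norm d * (mn (M1 - M2) * norm y' + norm (w1 - w2))"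
      using h by (simp add: power2_eq_square mult.commute mult.left_commute)
    ultimately show ?thesis unfolding d_def by simp
  qed
qed

lemma lcp2_bound:
  assumes k: "0 < k" and pd: "pdm k M0" and l: "lcp2 M0 w y"
  shows "k * norm y \<le> norm w"
proof -
  have "y \<bullet> (M0 *v y + w) = 0" using l unfolding lcp2_def lcpv_def by blast
  then have "k * (norm y)\<^sup>2 \<le> - (y \<bullet> w)" using pd unfolding pdm_def
    by (smt (verit) inner_add_right)
  also have "\<dots> \<le> norm y * norm w" using Cauchy_Schwarz_ineq2[of y w] by (simp add: abs_le_iff)
  finally have h: "norm y * (k * norm y) \<le> norm y * norm w" by (simp add: power2_eq_square mult.commute mult.left_commute)
  show ?thesis
  proof (cases "y = 0")
    case True then show ?thesis by simp
  next
    case False then show ?thesis using h by simp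
  qed
qed



definition XJ :: "'m set \<Rightarrow> real^'m^'m \<Rightarrow> real^'m^'m" where
  "XJ J M0 = mat 1 - diagJ J ** (mat 1 - M0)"

lemma mv_neg: "A *v (- x) = - (A *v (x::real^'a))"
  by (simp add: vec_eq_iff matrix_vector_mult_def sum_negf)

lemma mm_zero: "(A::real^'a^'b) ** (0::real^'c^'a) = 0"
  by (simp add: matrix_matrix_mult_def vec_eq_iff)

lemma diagJ_mv: "(diagJ J *v v) $ i = (if i \<in> J then v $ i else 0)"
proof -
  have "(diagJ J *v v) $ i = (\<Sum>j\<in>UNIV. (if i = j \<and> i \<in> J then 1 else 0) * v $ j)"
    by (simp add: matrix_vector_mult_def diagJ_def)
  also have "\<dots> = (\<Sum>j\<in>UNIV. if j = i then (if i \<in> J then v $ i else 0) else 0)"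
    by (intro sum.cong) auto
  also have "\<dots> = (if i \<in> J then v $ i else 0)" by simp
  finally show ?thesis .
qed

lemma XJ_mv: "(XJ J M0 *v v) $ i = (if i \<in> J then (M0 *v v) $ i else v $ i)"
proof -
  have "XJ J M0 *v v = v - diagJ J *v (v - M0 *v v)"
    by (simp add: XJ_def matrix_vector_mult_diff_rdistrib matrix_vector_mul_assoc[symmetric]
        matrix_vector_mult_diff_distrib)
  then show ?thesis by (simp add: diagJ_mv)
qed

lemma inner_cong_comp: "(\<And>i. d $ i = 0 \<or> a $ i = b $ i) \<Longrightarrow> d \<bullet> a = d \<bullet> (b::real^'m)"
  unfolding inner_vec_def by (intro sum.cong refl) (metis inner_zero_left)

lemma XJ_inj0:
  assumes k: "0 < k" and pd: "pdm k M0" and z: "XJ J M0 *v d = 0"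
  shows "d = 0"
proof -
  have c: "d $ i = 0 \<or> (M0 *v d) $ i = 0 $ i" for i
    using arg_cong[OF z, of "\<lambda>v. v $ i"] by (auto simp: XJ_mv split: if_splits)
  have "d \<bullet> (M0 *v d) = d \<bullet> 0" by (rule inner_cong_comp) (use c in blast)
  then have "k * (norm d)\<^sup>2 \<le> 0" using pd unfolding pdm_def by (metis inner_zero_right)
  then show ?thesis using k by (simp add: mult_le_0_iff)
qed

lemma XJ_invertible:
  assumes k: "0 < k" and pd: "pdm k M0"
  shows "invertible (XJ J M0)"
proof -
  have "inj ((*v) (XJ J M0))"
  proof (rule injI)
    fix a b assume "XJ J M0 *v a = XJ J M0 *v b"
    then have "XJ J M0 *v (a - b) = 0" by (simp add: matrix_vector_mult_diff_distrib)
    then have "a - b = 0" by (rule XJ_inj0[OF k pd])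
    then show "a = b" by simp
  qed
  then show ?thesis using matrix_left_invertible_injective invertible_left_inverse by blast
qed

lemma matrix_inv_props:
  fixes A :: "real^'m^'m"
  assumes "invertible A"
  shows "A ** matrix_inv A = mat 1" "matrix_inv A ** A = mat 1"
proof -
  have "\<exists>A'. A ** A' = mat 1 \<and> A' ** A = mat 1" using assms unfolding invertible_def by blast
  then have "A ** matrix_inv A = mat 1 \<and> matrix_inv A ** A = mat 1"
    unfolding matrix_inv_def by (rule someI_ex)
  then show "A ** matrix_inv A = mat 1" "matrix_inv A ** A = mat 1" by auto
qed

lemma UJ_XJ: "UJ J M0 = matrix_inv (XJ J M0) ** diagJ J"
  unfolding UJ_def XJ_def ..

lemma XJ_UJ_mv:
  assumes k: "0 < k" and pd: "pdm k M0"
  shows "XJ J M0 *v (UJ J M0 *v w) = diagJ J *v w"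
proof -
  have "XJ J M0 *v (UJ J M0 *v w) = (XJ J M0 ** matrix_inv (XJ J M0)) *v (diagJ J *v w)"
    by (simp add: UJ_XJ matrix_vector_mul_assoc matrix_mul_assoc)
  also have "\<dots> = diagJ J *v w" using matrix_inv_props(1)[OF XJ_invertible[OF k pd]] by simp
  finally show ?thesis .
qed

lemma UJ_comp:
  assumes k: "0 < k" and pd: "pdm k M0"
  shows "i \<notin> J \<Longrightarrow> (UJ J M0 *v w) $ i = 0" "i \<in> J \<Longrightarrow> (M0 *v (UJ J M0 *v w)) $ i = w $ i"
  using arg_cong[OF XJ_UJ_mv[OF k pd, of J w], of "\<lambda>v. v $ i"]
  by (auto simp: XJ_mv diagJ_mv)

lemma lcp2_UJ:
  assumes k: "0 < k" and pd: "pdm k M0" and l: "lcp2 M0 w y"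
  shows "y = - (UJ {i. 0 < y $ i} M0 *v w)"
proof -
  let ?J = "{i. 0 < y $ i}"
  have nn: "0 \<le> y $ i" for i using l unfolding lcp2_def lcpv_def nonneg_vec_def by blast
  have "XJ ?J M0 *v y = XJ ?J M0 *v (- (UJ ?J M0 *v w))"
  proof -
    have "(XJ ?J M0 *v y) $ i = (XJ ?J M0 *v (- (UJ ?J M0 *v w))) $ i" for i
    proof -
      have r: "XJ ?J M0 *v (- (UJ ?J M0 *v w)) = - (diagJ ?J *v w)"
        using XJ_UJ_mv[OF k pd, of ?J w] by (simp add: mv_neg)
      show ?thesis
      proof (cases "0 < y $ i")
        case True
        then have "(M0 *v y + w) $ i = 0" using lcpv_comp[OF l[unfolded lcp2_def], of i] by simp
        then show ?thesis using True by (simp add: r XJ_mv diagJ_mv eq_neg_iff_add_eq_0)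
      next
        case False
        then have "y $ i = 0" using nn[of i] by simp
        then show ?thesis using False by (simp add: r XJ_mv diagJ_mv)
      qed
    qed
    then show ?thesis by (simp add: vec_eq_iff)
  qed
  then show ?thesis using inj_matrix_vector_mult[OF XJ_invertible[OF k pd]] by (simp add: inj_eq)
qed

lemma UJ_empty: "UJ {} (M0::real^'m^'m) = 0"
proof -
  have e: "diagJ {} = (0::real^'m^'m)" by (simp add: diagJ_def vec_eq_iff)
  show ?thesis unfolding UJ_def e by (rule mm_zero)
qed

lemma UJ_bound:
  assumes k: "0 < k" and pd: "pdm k M0"
  shows "k * norm (UJ J M0 *v w) \<le> norm w"
proof -
  define v where "v = UJ J M0 *v w"
  have "v \<bullet> (M0 *v v) = v \<bullet> w"
  proof (rule inner_cong_comp)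
    fix i
    show "v $ i = 0 \<or> (M0 *v v) $ i = w $ i"
      using UJ_comp(1)[OF k pd, of i J w] UJ_comp(2)[OF k pd, of i J w] by (cases "i \<in> J") (auto simp: v_def)
  qed
  then have "k * (norm v)\<^sup>2 \<le> v \<bullet> w" using pd unfolding pdm_def by metis
  also have "\<dots> \<le> norm v * norm w" by (rule norm_cauchy_schwarz)
  finally have h: "norm v * (k * norm v) \<le> norm v * norm w" by (simp add: power2_eq_square mult.commute mult.left_commute)
  show ?thesis
  proof (cases "v = 0")
    case True then show ?thesis by (simp add: v_def)
  next
    case False then show ?thesis using h by (simp add: v_def)
  qed
qed

lemma UJ_perturb:
  assumes k: "0 < k" and pd: "pdm k M1" and k2: "0 < k2" and pd2: "pdm k2 M2"
  shows "k * norm (UJ J M1 *v w - UJ J M2 *v w) \<le> mn (M1 - M2) * norm (UJ J M2 *v w)"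
proof -
  define v1 where "v1 = UJ J M1 *v w"
  define v2 where "v2 = UJ J M2 *v w"
  define d where "d = v1 - v2"
  have "d \<bullet> (M1 *v d) = d \<bullet> (- ((M1 - M2) *v v2))"
  proof (rule inner_cong_comp)
    fix i
    show "d $ i = 0 \<or> (M1 *v d) $ i = (- ((M1 - M2) *v v2)) $ i"
    proof (cases "i \<in> J")
      case True
      have "(M1 *v d) $ i = (M1 *v v1) $ i - (M1 *v v2) $ i" by (simp add: d_def matrix_vector_mult_diff_distrib)
      also have "\<dots> = (M2 *v v2) $ i - (M1 *v v2) $ i"
        using UJ_comp(2)[OF k pd True] UJ_comp(2)[OF k2 pd2 True] by (simp add: v1_def v2_def)
      finally show ?thesis by (simp add: matrix_vector_mult_diff_rdistrib)
    next
      case False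
      then show ?thesis using UJ_comp(1)[OF k pd False] UJ_comp(1)[OF k2 pd2 False] by (simp add: d_def v1_def v2_def)
    qed
  qed
  then have "k * (norm d)\<^sup>2 \<le> d \<bullet> (- ((M1 - M2) *v v2))" using pd unfolding pdm_def by metis
  also have "\<dots> \<le> norm d * norm (- ((M1 - M2) *v v2))" by (rule norm_cauchy_schwarz)
  also have "\<dots> \<le> norm d * (mn (M1 - M2) * norm v2)"
    using norm_mv_le[of "M1 - M2" v2] by (simp add: mult_left_mono)
  finally have h: "norm d * (k * norm d) \<le> norm d * (mn (M1 - M2) * norm v2)" by (simp add: power2_eq_square mult.commute mult.left_commute)
  have dd: "UJ J M1 *v w - UJ J M2 *v w = d" and vv: "UJ J M2 *v w = v2" by (simp_all add: d_def v1_def v2_def)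
  have fin: "k * norm d \<le> mn (M1 - M2) * norm v2"
  proof (cases "d = 0")
    case True then show ?thesis using mn_nonneg[of "M1 - M2"] by simp
  next
    case False then show ?thesis using h by simp
  qed
  show ?thesis using fin unfolding d_def v1_def v2_def .
qed



lemma cont_mv: "continuous_on S X \<Longrightarrow> continuous_on S v \<Longrightarrow> continuous_on S (\<lambda>\<xi>. X \<xi> *v (v \<xi>::real^'a))"
  unfolding matrix_vector_mult_def by (intro continuous_intros)

lemma cont_mm: "continuous_on S X \<Longrightarrow> continuous_on S Y \<Longrightarrow> continuous_on S (\<lambda>\<xi>. X \<xi> ** (Y \<xi>::real^'c^'a))"
  unfolding matrix_matrix_mult_def by (intro continuous_intros)

lemma cont_mn: "continuous_on S X \<Longrightarrow> continuous_on S (\<lambda>\<xi>. mn (X \<xi>))"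
  unfolding mn_def by (intro continuous_intros)

lemma tendsto_mn: "(X \<longlongrightarrow> X0) F \<Longrightarrow> ((\<lambda>\<xi>. mn (X \<xi>)) \<longlongrightarrow> mn X0) F"
  unfolding mn_def by (intro tendsto_intros)

lemma cont_by_bound:
  fixes f :: "'a::topological_space \<Rightarrow> 'b::real_normed_vector"
  assumes "\<And>x0. x0 \<in> S \<Longrightarrow> \<exists>g. (g \<longlongrightarrow> 0) (at x0 within S) \<and> (\<forall>x\<in>S. norm (f x - f x0) \<le> g x)"
  shows "continuous_on S f"
  unfolding continuous_on_def
proof
  fix x0 assume x0: "x0 \<in> S"
  obtain g where g: "(g \<longlongrightarrow> 0) (at x0 within S)" "\<forall>x\<in>S. norm (f x - f x0) \<le> g x"
    using assms[OF x0] by blast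
  have "eventually (\<lambda>x. norm (f x - f x0) \<le> g x) (at x0 within S)"
    using g(2) by (auto simp: eventually_at_filter)
  then have "((\<lambda>x. f x - f x0) \<longlongrightarrow> 0) (at x0 within S)"
    by (rule Lim_null_comparison) (rule g(1))
  then show "(f \<longlongrightarrow> f x0) (at x0 within S)" by (simp add: Lim_null[symmetric])
qed

lemma cont_at_within: "continuous_on UNIV f \<Longrightarrow> (f \<longlongrightarrow> f x) (at x within S)"
  by (meson continuous_on_def UNIV_I subset_UNIV tendsto_within_subset)

lemma matrix_cols: "(X::real^'a^'b) = (\<chi> i j. (X *v axis j 1) $ i)"
  by (simp add: vec_eq_iff matrix_vector_mult_def axis_def if_distrib cong: if_cong)

lemma msupport_closed: "closed (msupport P)"
proof -
  have "open (- msupport P)"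
    unfolding open_subopen[of "- msupport P"]
  proof
    fix x assume "x \<in> - msupport P"
    then obtain U where U: "open U" "x \<in> U" "\<not> emeasure P U > 0" unfolding msupport_def by blast
    have "U \<subseteq> - msupport P" using U unfolding msupport_def by blast
    then show "\<exists>T. open T \<and> x \<in> T \<and> T \<subseteq> - msupport P" using U by blast
  qed
  then show ?thesis by (simp add: closed_def)
qed

locale setting =
  fixes P :: "(real^'l) measure"
    and A :: "real^'n^'n" and q1 :: "real^'n"
    and B :: "real^'l \<Rightarrow> real^'m^'n"
    and M :: "real^'l \<Rightarrow> real^'m^'m"
    and N :: "real^'l \<Rightarrow> real^'n^'m"
    and q2 :: "real^'l \<Rightarrow> real^'m"
    and \<kappa> :: "real^'l \<Rightarrow> real"
  assumes P: "prob_space P" and sets_P: "sets P = sets borel"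
    and contB: "continuous_on UNIV B" and contM: "continuous_on UNIV M"
    and contN: "continuous_on UNIV N" and contq2: "continuous_on UNIV q2"
    and kappa_cont: "continuous_on UNIV \<kappa>"
    and kappa_pos: "\<And>\<xi>. \<kappa> \<xi> > 0"
    and kappa_int: "integrable P \<kappa>"
    and mono: "AE \<xi> in P. \<forall>z u.
        z \<bullet> (A *v z + B \<xi> *v u) + u \<bullet> (N \<xi> *v z + M \<xi> *v u)
          \<ge> \<kappa> \<xi> * (norm z ^ 2 + norm u ^ 2)"
begin

interpretation prob_space P by (rule P)

definition pos :: "real^'l \<Rightarrow> bool" where
  "pos \<xi> \<longleftrightarrow> (\<forall>z u. z \<bullet> (A *v z + B \<xi> *v u) + u \<bullet> (N \<xi> *v z + M \<xi> *v u)
          \<ge> \<kappa> \<xi> * (norm z ^ 2 + norm u ^ 2))"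

lemma space_P: "space P = UNIV"
  using sets_eq_imp_space_eq[OF sets_P] by simp

lemma meas_P: "measurable P = measurable borel"
  by (intro ext measurable_cong_sets[OF sets_P refl])

lemma borel_P: "f \<in> borel_measurable P \<longleftrightarrow> f \<in> borel_measurable borel"
  by (simp add: meas_P)

lemma sets_P_iff: "S \<in> sets P \<longleftrightarrow> S \<in> sets borel"
  by (simp add: sets_P)

lemma closed_pos: "closed {\<xi>. pos \<xi>}"
  unfolding pos_def
proof (intro closed_Collect_all closed_Collect_le)
  fix z :: "real^'n" and u :: "real^'m"
  show "continuous_on UNIV (\<lambda>x. \<kappa> x * ((norm z)\<^sup>2 + (norm u)\<^sup>2))"
    by (intro continuous_intros kappa_cont)
  show "continuous_on UNIV (\<lambda>x. z \<bullet> (A *v z + B x *v u) + u \<bullet> (N x *v z + M x *v u))"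
    by (intro continuous_intros cont_mv contB contM contN)
qed

lemma pos_support: "\<xi> \<in> msupport P \<Longrightarrow> pos \<xi>"
proof (rule ccontr)
  assume s: "\<xi> \<in> msupport P" and n: "\<not> pos \<xi>"
  have o: "open (- {\<xi>. pos \<xi>})" using closed_pos by (simp add: open_Compl)
  then have m: "- {\<xi>. pos \<xi>} \<in> sets P" by (simp add: sets_P)
  have "AE \<xi> in P. pos \<xi>" using mono unfolding pos_def by simp
  then have "emeasure P (- {\<xi>. pos \<xi>}) = 0"
    using AE_iff_measurable[OF m] by (simp add: space_P Compl_eq)
  moreover have "emeasure P (- {\<xi>. pos \<xi>}) > 0"
    using s n o unfolding msupport_def by blast
  ultimately show False by simp
qed

lemma pdm_support: "\<xi> \<in> msupport P \<Longrightarrow> pdm (\<kappa> \<xi>) (M \<xi>)"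
  using pos_support unfolding pos_def pdm_def
  by (metis (no_types, lifting) add_0 inner_zero_left matrix_vector_mult_0_right norm_zero power_zero_numeral)

lemma ex_pos: "\<exists>\<xi>0. pos \<xi>0"
proof (rule ccontr)
  assume na: "\<not> (\<exists>\<xi>0. pos \<xi>0)"
  have "AE \<xi> in P. pos \<xi>" using mono unfolding pos_def by simp
  then have "AE \<xi> in P. False" by (rule AE_mp) (use na in auto)
  then show False using AE_False by simp
qed

definition c0 where "c0 = \<kappa> (SOME \<xi>0. pos \<xi>0)"

lemma c0_pos: "0 < c0" unfolding c0_def by (rule kappa_pos)

lemma pdA: "c0 * (norm z)\<^sup>2 \<le> z \<bullet> (A *v z)"
proof -
  have "pos (SOME \<xi>0. pos \<xi>0)" using ex_pos by (rule someI_ex)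
  then show ?thesis unfolding pos_def c0_def
    by (metis (no_types, lifting) add_0_right inner_zero_left matrix_vector_mult_0_right norm_zero power_zero_numeral)
qed

lemma Sigma_sets: "msupport P \<in> sets P"
  using borel_closed[OF msupport_closed] by (simp add: sets_P)

lemma kappa_meas: "\<kappa> \<in> borel_measurable P"
  using borel_measurable_continuous_onI[OF kappa_cont] by (simp add: borel_P)

definition cst where "cst = integral\<^sup>L P (\<lambda>\<xi>. min (\<kappa> \<xi>) c0)"

lemma int_min: "integrable P (\<lambda>\<xi>. min (\<kappa> \<xi>) c0)"
proof (rule integrable_const_bound[where B=c0])
  show "AE x in P. norm (min (\<kappa> x) c0) \<le> c0"
  proof (rule AE_I2)
    fix x
    have "0 < min (\<kappa> x) c0" using kappa_pos[of x] c0_pos by simp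
    then show "norm (min (\<kappa> x) c0) \<le> c0" by simp
  qed
  show "(\<lambda>\<xi>. min (\<kappa> \<xi>) c0) \<in> borel_measurable P" using kappa_meas by measurable
qed

lemma cst_pos: "0 < cst"
proof -
  have mp: "0 < min (\<kappa> x) c0" for x using kappa_pos[of x] c0_pos by simp
  have nn: "AE x in P. 0 \<le> min (\<kappa> x) c0" using mp by (intro AE_I2) (simp add: less_imp_le)
  have "0 \<le> cst" unfolding cst_def using nn by (intro integral_nonneg_AE) 
  moreover have "cst \<noteq> 0"
  proof
    assume "cst = 0"
    then have h1: "AE x in P. min (\<kappa> x) c0 = 0"
      using integral_nonneg_eq_0_iff_AE[OF int_min nn] unfolding cst_def by simp
    have h2: "AE x in P. min (\<kappa> x) c0 = 0 \<longrightarrow> False" using mp by (intro AE_I2) (metis less_irrefl)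
    have "AE x in P. False" using AE_mp[OF h1 h2] .
    then show False using AE_False by simp
  qed
  ultimately show ?thesis by simp
qed

lemma cst_le:
  assumes S: "S \<in> sets P"
  shows "cst \<le> (1 - measure P S) * c0 + (LINT \<xi>:S|P. \<kappa> \<xi>)"
proof -
  have iS: "integrable P (\<lambda>\<xi>. indicator S \<xi> * \<kappa> \<xi>)"
    using integrable_real_mult_indicator[OF S kappa_int] by (simp add: mult.commute)
  have iC: "integrable P (\<lambda>\<xi>. indicator (space P - S) \<xi> * c0)"
    using integrable_real_mult_indicator[of "space P - S" P "\<lambda>_. c0"] S by (simp add: mult.commute)
  have "cst \<le> integral\<^sup>L P (\<lambda>\<xi>. indicator S \<xi> * \<kappa> \<xi> + indicator (space P - S) \<xi> * c0)"
    unfolding cst_def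
  proof (rule integral_mono[OF int_min Bochner_Integration.integrable_add[OF iS iC]])
    fix \<xi> show "min (\<kappa> \<xi>) c0 \<le> indicator S \<xi> * \<kappa> \<xi> + indicator (space P - S) \<xi> * c0"
      by (cases "\<xi> \<in> S") (auto simp: space_P indicator_def)
  qed
  also have "\<dots> = integral\<^sup>L P (\<lambda>\<xi>. indicator S \<xi> * \<kappa> \<xi>) + integral\<^sup>L P (\<lambda>\<xi>. indicator (space P - S) \<xi> * c0)"
    by (rule Bochner_Integration.integral_add[OF iS iC])
  also have "integral\<^sup>L P (\<lambda>\<xi>. indicator (space P - S) \<xi> * c0) = measure P (space P - S) * c0"
    by (simp add: Int_absorb2)
  also have "measure P (space P - S) = 1 - measure P S" using prob_compl[OF S] .
  also have "integral\<^sup>L P (\<lambda>\<xi>. indicator S \<xi> * \<kappa> \<xi>) = (LINT \<xi>:S|P. \<kappa> \<xi>)"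
    by (simp add: set_lebesgue_integral_def)
  finally show ?thesis by simp
qed

end


context setting
begin

interpretation prob_space P by (rule P)

lemma set_inner:
  assumes "set_integrable P S f"
  shows "set_integrable P S (\<lambda>\<xi>. z \<bullet> f \<xi>)" "(LINT \<xi>:S|P. z \<bullet> f \<xi>) = z \<bullet> (LINT \<xi>:S|P. f \<xi>)"
proof -
  have eq: "(\<lambda>\<xi>. indicator S \<xi> *\<^sub>R (z \<bullet> f \<xi>)) = (\<lambda>\<xi>. z \<bullet> (indicator S \<xi> *\<^sub>R f \<xi>))"
    by (simp add: inner_scaleR_right)
  show "set_integrable P S (\<lambda>\<xi>. z \<bullet> f \<xi>)" unfolding set_integrable_def eq
    by (intro integrable_inner_right) (use assms in \<open>simp add: set_integrable_def\<close>)
  show "(LINT \<xi>:S|P. z \<bullet> f \<xi>) = z \<bullet> (LINT \<xi>:S|P. f \<xi>)"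
    unfolding set_lebesgue_integral_def eq
    by (intro integral_inner_right) (use assms in \<open>simp add: set_integrable_def\<close>)
qed

lemma set_const:
  assumes S: "S \<in> sets P"
  shows "set_integrable P S (\<lambda>_. c::real)" "(LINT \<xi>:S|P. c) = measure P S * c"
proof -
  show "set_integrable P S (\<lambda>_. c::real)" unfolding set_integrable_def
    using integrable_mult_indicator[OF S integrable_const[of c]] .
  show "(LINT \<xi>:S|P. c) = measure P S * c" using set_integral_const[OF S, of c] emeasure_finite[of S] by simp
qed

lemma set_kappa: "S \<in> sets P \<Longrightarrow> set_integrable P S \<kappa>"
  unfolding set_integrable_def by (rule integrable_mult_indicator[OF _ kappa_int])

lemma lower:
  assumes S: "S \<in> sets P" "S \<subseteq> msupport P"
    and i1: "set_integrable P S (\<lambda>\<xi>. B \<xi> *v y1 \<xi>)" and i2: "set_integrable P S (\<lambda>\<xi>. B \<xi> *v y2 \<xi>)"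
    and a1: "AE \<xi> in P. \<xi> \<in> S \<longrightarrow> lcp2 (M \<xi>) (N \<xi> *v x1 + q2 \<xi>) (y1 \<xi>)"
    and a2: "AE \<xi> in P. \<xi> \<in> S \<longrightarrow> lcp2 (M \<xi>) (N \<xi> *v x2 + q2 \<xi>) (y2 \<xi>)"
  shows "cst * (norm (x1 - x2))\<^sup>2 \<le> (x1 - x2) \<bullet> (A *v (x1 - x2) + ((LINT \<xi>:S|P. B \<xi> *v y1 \<xi>) - (LINT \<xi>:S|P. B \<xi> *v y2 \<xi>)))"
proof -
  define z where "z = x1 - x2"
  have pw: "\<kappa> \<xi> * (norm z)\<^sup>2 - z \<bullet> (A *v z) \<le> z \<bullet> (B \<xi> *v y1 \<xi> - B \<xi> *v y2 \<xi>)"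
    if "\<xi> \<in> S" "lcp2 (M \<xi>) (N \<xi> *v x1 + q2 \<xi>) (y1 \<xi>)" "lcp2 (M \<xi>) (N \<xi> *v x2 + q2 \<xi>) (y2 \<xi>)" for \<xi>
  proof -
    define u where "u = y1 \<xi> - y2 \<xi>"
    have "u \<bullet> ((M \<xi> *v y1 \<xi> + (N \<xi> *v x1 + q2 \<xi>)) - (M \<xi> *v y2 \<xi> + (N \<xi> *v x2 + q2 \<xi>))) \<le> 0"
      unfolding u_def by (rule lcpv_ineq[OF that(2)[unfolded lcp2_def] that(3)[unfolded lcp2_def]])
    moreover have "(M \<xi> *v y1 \<xi> + (N \<xi> *v x1 + q2 \<xi>)) - (M \<xi> *v y2 \<xi> + (N \<xi> *v x2 + q2 \<xi>)) = N \<xi> *v z + M \<xi> *v u"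
      by (simp add: u_def z_def matrix_vector_mult_diff_distrib algebra_simps)
    ultimately have h1: "u \<bullet> (N \<xi> *v z + M \<xi> *v u) \<le> 0" by simp
    have "pos \<xi>" using that(1) S(2) pos_support by blast
    then have h2: "\<kappa> \<xi> * ((norm z)\<^sup>2 + (norm u)\<^sup>2) \<le> z \<bullet> (A *v z + B \<xi> *v u) + u \<bullet> (N \<xi> *v z + M \<xi> *v u)"
      unfolding pos_def by blast
    have h3: "\<kappa> \<xi> * (norm z)\<^sup>2 \<le> \<kappa> \<xi> * ((norm z)\<^sup>2 + (norm u)\<^sup>2)" using kappa_pos[of \<xi>] by simp
    have h4: "z \<bullet> (A *v z + B \<xi> *v u) = z \<bullet> (A *v z) + z \<bullet> (B \<xi> *v y1 \<xi> - B \<xi> *v y2 \<xi>)"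
      by (simp add: u_def matrix_vector_mult_diff_distrib inner_add_right)
    show ?thesis using h1 h2 h3 h4 by linarith
  qed
  have iD: "set_integrable P S (\<lambda>\<xi>. B \<xi> *v y1 \<xi> - B \<xi> *v y2 \<xi>)" using i1 i2 by (rule set_integral_diff(1))
  have iF: "set_integrable P S (\<lambda>\<xi>. z \<bullet> (B \<xi> *v y1 \<xi> - B \<xi> *v y2 \<xi>))" using set_inner(1)[OF iD] .
  have vF: "(LINT \<xi>:S|P. z \<bullet> (B \<xi> *v y1 \<xi> - B \<xi> *v y2 \<xi>)) = z \<bullet> ((LINT \<xi>:S|P. B \<xi> *v y1 \<xi>) - (LINT \<xi>:S|P. B \<xi> *v y2 \<xi>))"
    using set_inner(2)[OF iD] set_integral_diff(2)[OF i1 i2] by simp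
  have iK: "set_integrable P S (\<lambda>\<xi>. (norm z)\<^sup>2 * \<kappa> \<xi>)" using set_kappa[OF S(1)] by simp
  have iC: "set_integrable P S (\<lambda>\<xi>. z \<bullet> (A *v z))" using set_const(1)[OF S(1)] .
  have iG: "set_integrable P S (\<lambda>\<xi>. \<kappa> \<xi> * (norm z)\<^sup>2 - z \<bullet> (A *v z))"
    using set_integral_diff(1)[OF iK iC] by (simp add: mult.commute)
  have vG: "(LINT \<xi>:S|P. \<kappa> \<xi> * (norm z)\<^sup>2 - z \<bullet> (A *v z)) = (norm z)\<^sup>2 * (LINT \<xi>:S|P. \<kappa> \<xi>) - measure P S * (z \<bullet> (A *v z))"
    using set_integral_diff(2)[OF iK iC] set_const(2)[OF S(1)] by (simp add: mult.commute)
  have "AE \<xi> in P. \<xi> \<in> S \<longrightarrow> \<kappa> \<xi> * (norm z)\<^sup>2 - z \<bullet> (A *v z) \<le> z \<bullet> (B \<xi> *v y1 \<xi> - B \<xi> *v y2 \<xi>)"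
    using a1 a2
  proof eventually_elim
    case (elim \<xi>) then show ?case using pw by blast
  qed
  then have mono_int: "(norm z)\<^sup>2 * (LINT \<xi>:S|P. \<kappa> \<xi>) - measure P S * (z \<bullet> (A *v z))
      \<le> z \<bullet> ((LINT \<xi>:S|P. B \<xi> *v y1 \<xi>) - (LINT \<xi>:S|P. B \<xi> *v y2 \<xi>))"
    using set_integral_mono_AE[OF iG iF] vF vG by simp
  have "cst * (norm z)\<^sup>2 \<le> ((1 - measure P S) * c0 + (LINT \<xi>:S|P. \<kappa> \<xi>)) * (norm z)\<^sup>2"
    using cst_le[OF S(1)] by (intro mult_right_mono) auto
  also have "\<dots> = (1 - measure P S) * (c0 * (norm z)\<^sup>2) + (norm z)\<^sup>2 * (LINT \<xi>:S|P. \<kappa> \<xi>)"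
    by (simp add: algebra_simps)
  also have "\<dots> \<le> (1 - measure P S) * (z \<bullet> (A *v z)) + (norm z)\<^sup>2 * (LINT \<xi>:S|P. \<kappa> \<xi>)"
    using pdA[of z] prob_le_1[of S] by (intro add_right_mono mult_left_mono) auto
  also have "\<dots> \<le> z \<bullet> (A *v z) + z \<bullet> ((LINT \<xi>:S|P. B \<xi> *v y1 \<xi>) - (LINT \<xi>:S|P. B \<xi> *v y2 \<xi>))"
    using mono_int by (simp add: algebra_simps)
  finally show ?thesis unfolding z_def by (simp add: inner_add_right)
qed

end


lemma cont_bound: "compact S \<Longrightarrow> continuous_on S h \<Longrightarrow> \<exists>K. \<forall>\<xi>\<in>S. norm (h \<xi>) \<le> K"
  using compact_imp_bounded[OF compact_continuous_image] bounded_iff by (metis image_eqI)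

context setting
begin

interpretation prob_space P by (rule P)

lemma sol_cont:
  assumes S: "S \<subseteq> msupport P" and w: "continuous_on UNIV w"
  shows "continuous_on S (\<lambda>\<xi>. sol2 (M \<xi>) (w \<xi>))"
proof (rule cont_by_bound)
  fix \<xi>0 assume \<xi>0: "\<xi>0 \<in> S"
  let ?s = "\<lambda>\<xi>. sol2 (M \<xi>) (w \<xi>)"
  define g where "g \<xi> = (mn (M \<xi>0 - M \<xi>) * (norm (w \<xi>) / \<kappa> \<xi>) + norm (w \<xi>0 - w \<xi>)) / \<kappa> \<xi>0" for \<xi>
  have "(g \<longlongrightarrow> (mn (M \<xi>0 - M \<xi>0) * (norm (w \<xi>0) / \<kappa> \<xi>0) + norm (w \<xi>0 - w \<xi>0)) / \<kappa> \<xi>0) (at \<xi>0 within S)"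
    unfolding g_def
    by (intro tendsto_intros tendsto_mn cont_at_within contM w kappa_cont) (use kappa_pos[of \<xi>0] in auto)
  moreover have "mn (M \<xi>0 - M \<xi>0) = 0" by (simp add: mn_def)
  ultimately have g0: "(g \<longlongrightarrow> 0) (at \<xi>0 within S)" by simp
  have "norm (?s \<xi> - ?s \<xi>0) \<le> g \<xi>" if \<xi>: "\<xi> \<in> S" for \<xi>
  proof -
    have pd0: "pdm (\<kappa> \<xi>0) (M \<xi>0)" using \<xi>0 S pdm_support by blast
    have pd: "pdm (\<kappa> \<xi>) (M \<xi>)" using \<xi> S pdm_support by blast
    have l0: "lcp2 (M \<xi>0) (w \<xi>0) (?s \<xi>0)" by (rule sol2_lcp[OF kappa_pos pd0])
    have l: "lcp2 (M \<xi>) (w \<xi>) (?s \<xi>)" by (rule sol2_lcp[OF kappa_pos pd])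
    have p: "\<kappa> \<xi>0 * norm (?s \<xi>0 - ?s \<xi>) \<le> mn (M \<xi>0 - M \<xi>) * norm (?s \<xi>) + norm (w \<xi>0 - w \<xi>)"
      by (rule lcp2_perturb[OF kappa_pos pd0 l0 l])
    have b: "\<kappa> \<xi> * norm (?s \<xi>) \<le> norm (w \<xi>)" by (rule lcp2_bound[OF kappa_pos pd l])
    then have b': "norm (?s \<xi>) \<le> norm (w \<xi>) / \<kappa> \<xi>" using kappa_pos[of \<xi>] by (simp add: field_simps)
    have "mn (M \<xi>0 - M \<xi>) * norm (?s \<xi>) \<le> mn (M \<xi>0 - M \<xi>) * (norm (w \<xi>) / \<kappa> \<xi>)"
      using b' mn_nonneg by (rule mult_left_mono)
    then have "\<kappa> \<xi>0 * norm (?s \<xi>0 - ?s \<xi>) \<le> mn (M \<xi>0 - M \<xi>) * (norm (w \<xi>) / \<kappa> \<xi>) + norm (w \<xi>0 - w \<xi>)"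
      using p by linarith
    then show ?thesis unfolding g_def using kappa_pos[of \<xi>0] by (simp add: field_simps norm_minus_commute)
  qed
  then show "\<exists>g. (g \<longlongrightarrow> 0) (at \<xi>0 within S) \<and> (\<forall>x\<in>S. norm (?s x - ?s \<xi>0) \<le> g x)"
    using g0 by blast
qed

lemma UJ_cont:
  assumes S: "S \<subseteq> msupport P"
  shows "continuous_on S (\<lambda>\<xi>. UJ J (M \<xi>) *v e)"
proof (rule cont_by_bound)
  fix \<xi>0 assume \<xi>0: "\<xi>0 \<in> S"
  let ?s = "\<lambda>\<xi>. UJ J (M \<xi>) *v e"
  define g where "g \<xi> = mn (M \<xi>0 - M \<xi>) * (norm e / \<kappa> \<xi>) / \<kappa> \<xi>0" for \<xi>
  have "(g \<longlongrightarrow> mn (M \<xi>0 - M \<xi>0) * (norm e / \<kappa> \<xi>0) / \<kappa> \<xi>0) (at \<xi>0 within S)"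
    unfolding g_def
    by (intro tendsto_intros tendsto_mn cont_at_within contM kappa_cont) (use kappa_pos[of \<xi>0] in auto)
  moreover have "mn (M \<xi>0 - M \<xi>0) = 0" by (simp add: mn_def)
  ultimately have g0: "(g \<longlongrightarrow> 0) (at \<xi>0 within S)" by simp
  have "norm (?s \<xi> - ?s \<xi>0) \<le> g \<xi>" if \<xi>: "\<xi> \<in> S" for \<xi>
  proof -
    have pd0: "pdm (\<kappa> \<xi>0) (M \<xi>0)" using \<xi>0 S pdm_support by blast
    have pd: "pdm (\<kappa> \<xi>) (M \<xi>)" using \<xi> S pdm_support by blast
    have p: "\<kappa> \<xi>0 * norm (?s \<xi>0 - ?s \<xi>) \<le> mn (M \<xi>0 - M \<xi>) * norm (?s \<xi>)"
      by (rule UJ_perturb[OF kappa_pos pd0 kappa_pos pd])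
    have b: "\<kappa> \<xi> * norm (?s \<xi>) \<le> norm e" by (rule UJ_bound[OF kappa_pos pd])
    then have b': "norm (?s \<xi>) \<le> norm e / \<kappa> \<xi>" using kappa_pos[of \<xi>] by (simp add: field_simps)
    have "mn (M \<xi>0 - M \<xi>) * norm (?s \<xi>) \<le> mn (M \<xi>0 - M \<xi>) * (norm e / \<kappa> \<xi>)"
      using b' mn_nonneg by (rule mult_left_mono)
    then have "\<kappa> \<xi>0 * norm (?s \<xi>0 - ?s \<xi>) \<le> mn (M \<xi>0 - M \<xi>) * (norm e / \<kappa> \<xi>)"
      using p by linarith
    then have "norm (?s \<xi>0 - ?s \<xi>) * \<kappa> \<xi>0 \<le> mn (M \<xi>0 - M \<xi>) * (norm e / \<kappa> \<xi>)"
      by (simp only: mult.commute)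
    then have "norm (?s \<xi>0 - ?s \<xi>) \<le> mn (M \<xi>0 - M \<xi>) * (norm e / \<kappa> \<xi>) / \<kappa> \<xi>0"
      using pos_le_divide_eq[OF kappa_pos[of \<xi>0]] by blast
    then show ?thesis unfolding g_def by (simp only: norm_minus_commute)
  qed
  then show "\<exists>g. (g \<longlongrightarrow> 0) (at \<xi>0 within S) \<and> (\<forall>x\<in>S. norm (?s x - ?s \<xi>0) \<le> g x)"
    using g0 by blast
qed

lemma UJ_mat_cont:
  assumes S: "S \<subseteq> msupport P"
  shows "continuous_on S (\<lambda>\<xi>. UJ J (M \<xi>))"
proof -
  have "continuous_on S (\<lambda>\<xi>. \<chi> i j. (UJ J (M \<xi>) *v axis j 1) $ i)"
    by (intro continuous_on_vec_lambda continuous_on_component UJ_cont[OF S])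
  then show ?thesis using matrix_cols[of "UJ J (M _)"] by simp
qed

end


context setting
begin

interpretation prob_space P by (rule P)

definition Ysol :: "(real^'l) set \<Rightarrow> real^'n \<Rightarrow> real^'l \<Rightarrow> real^'m" where
  "Ysol S x \<xi> = indicator S \<xi> *\<^sub>R sol2 (M \<xi>) (N \<xi> *v x + q2 \<xi>)"

definition Fop :: "(real^'l) set \<Rightarrow> real^'n \<Rightarrow> real^'n" where
  "Fop S x = A *v x + (LINT \<xi>:S|P. B \<xi> *v Ysol S x \<xi>) + q1"

lemma w_cont: "continuous_on UNIV (\<lambda>\<xi>. N \<xi> *v x + q2 \<xi>)"
  by (intro continuous_intros cont_mv contN contq2)

lemma Ysol_in: "\<xi> \<in> S \<Longrightarrow> Ysol S x \<xi> = sol2 (M \<xi>) (N \<xi> *v x + q2 \<xi>)"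
  by (simp add: Ysol_def)

lemma Ysol_lcp: "S \<subseteq> msupport P \<Longrightarrow> \<xi> \<in> S \<Longrightarrow> lcp2 (M \<xi>) (N \<xi> *v x + q2 \<xi>) (Ysol S x \<xi>)"
  unfolding Ysol_in by (rule sol2_lcp[OF kappa_pos pdm_support]) blast

lemma Ysol_meas:
  assumes "closed S" "S \<subseteq> msupport P"
  shows "Ysol S x \<in> borel_measurable P"
  unfolding borel_P Ysol_def
  by (rule borel_measurable_continuous_on_indicator[OF borel_closed[OF assms(1)] sol_cont[OF assms(2) w_cont]])

lemma BY_ind: "indicator S \<xi> *\<^sub>R (B \<xi> *v Ysol S x \<xi>) = indicator S \<xi> *\<^sub>R (B \<xi> *v sol2 (M \<xi>) (N \<xi> *v x + q2 \<xi>))"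
  by (cases "\<xi> \<in> S") (simp_all add: Ysol_def)

lemma BY_int:
  assumes S: "compact S" "S \<subseteq> msupport P"
  shows "set_integrable P S (\<lambda>\<xi>. B \<xi> *v Ysol S x \<xi>)"
proof -
  let ?h = "\<lambda>\<xi>. B \<xi> *v sol2 (M \<xi>) (N \<xi> *v x + q2 \<xi>)"
  have ch: "continuous_on S ?h"
    by (intro cont_mv continuous_on_subset[OF contB] sol_cont[OF S(2) w_cont]) auto
  obtain K where K: "\<forall>\<xi>\<in>S. norm (?h \<xi>) \<le> K" using cont_bound[OF S(1) ch] by blast
  have "integrable P (\<lambda>\<xi>. indicator S \<xi> *\<^sub>R ?h \<xi>)"
  proof (rule integrable_const_bound[where B="max K 0"])
    show "AE \<xi> in P. norm (indicator S \<xi> *\<^sub>R ?h \<xi>) \<le> max K 0"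
    proof (rule AE_I2)
      fix \<xi>
      show "norm (indicator S \<xi> *\<^sub>R ?h \<xi>) \<le> max K 0"
      proof (cases "\<xi> \<in> S")
        case True then show ?thesis using K by (simp add: le_max_iff_disj)
      qed simp
    qed
    show "(\<lambda>\<xi>. indicator S \<xi> *\<^sub>R ?h \<xi>) \<in> borel_measurable P"
      unfolding borel_P
      by (rule borel_measurable_continuous_on_indicator[OF borel_compact[OF S(1)] ch])
  qed
  then show ?thesis unfolding set_integrable_def BY_ind .
qed

end


context setting
begin

interpretation prob_space P by (rule P)

lemma Fop_lip:
  assumes S: "compact S" "S \<subseteq> msupport P"
  shows "\<exists>L. \<forall>x x'. norm (Fop S x - Fop S x') \<le> L * norm (x - x')"
proof -
  have knz: "\<forall>\<xi>\<in>S. \<kappa> \<xi> \<noteq> 0" by (metis kappa_pos less_irrefl)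
  have ck: "continuous_on S (\<lambda>\<xi>. mn (B \<xi>) * mn (N \<xi>) / \<kappa> \<xi>)"
    by (intro continuous_intros cont_mn continuous_on_subset[OF contB] continuous_on_subset[OF contN]
        continuous_on_subset[OF kappa_cont] knz) auto
  obtain K2 where K2: "\<forall>\<xi>\<in>S. norm (mn (B \<xi>) * mn (N \<xi>) / \<kappa> \<xi>) \<le> K2" using cont_bound[OF S(1) ck] by blast
  define K where "K = max K2 0"
  have K0: "0 \<le> K" unfolding K_def by simp
  have SP: "S \<in> sets P" using borel_compact[OF S(1)] by (simp add: sets_P)
  have "norm (Fop S x - Fop S x') \<le> (mn A + K) * norm (x - x')" for x x'
  proof -
    define d where "d = x - x'"
    define D where "D \<xi> = B \<xi> *v Ysol S x \<xi> - B \<xi> *v Ysol S x' \<xi>" for \<xi>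
    have pw: "norm (D \<xi>) \<le> K * norm d" if \<xi>: "\<xi> \<in> S" for \<xi>
    proof -
      have pd: "pdm (\<kappa> \<xi>) (M \<xi>)" using \<xi> S pdm_support by blast
      have "\<kappa> \<xi> * norm (Ysol S x \<xi> - Ysol S x' \<xi>) \<le> mn (M \<xi> - M \<xi>) * norm (Ysol S x' \<xi>) + norm ((N \<xi> *v x + q2 \<xi>) - (N \<xi> *v x' + q2 \<xi>))"
        by (rule lcp2_perturb[OF kappa_pos pd Ysol_lcp[OF S(2) \<xi>] Ysol_lcp[OF S(2) \<xi>]])
      also have "\<dots> = norm (N \<xi> *v d)" by (simp add: mn_def d_def matrix_vector_mult_diff_distrib)
      also have "\<dots> \<le> mn (N \<xi>) * norm d" by (rule norm_mv_le)
      finally have h1: "norm (Ysol S x \<xi> - Ysol S x' \<xi>) \<le> mn (N \<xi>) * norm d / \<kappa> \<xi>"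
        using kappa_pos[of \<xi>] by (simp add: pos_le_divide_eq mult.commute)
      have "norm (D \<xi>) = norm (B \<xi> *v (Ysol S x \<xi> - Ysol S x' \<xi>))" by (simp add: D_def matrix_vector_mult_diff_distrib)
      also have "\<dots> \<le> mn (B \<xi>) * norm (Ysol S x \<xi> - Ysol S x' \<xi>)" by (rule norm_mv_le)
      also have "\<dots> \<le> mn (B \<xi>) * (mn (N \<xi>) * norm d / \<kappa> \<xi>)" using h1 mn_nonneg by (rule mult_left_mono)
      also have "\<dots> = (mn (B \<xi>) * mn (N \<xi>) / \<kappa> \<xi>) * norm d" by simp
      also have "\<dots> \<le> K * norm d"
      proof (rule mult_right_mono)
        have "mn (B \<xi>) * mn (N \<xi>) / \<kappa> \<xi> \<le> norm (mn (B \<xi>) * mn (N \<xi>) / \<kappa> \<xi>)"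
          unfolding real_norm_def by (rule abs_ge_self)
        then show "mn (B \<xi>) * mn (N \<xi>) / \<kappa> \<xi> \<le> K" using K2 \<xi> unfolding K_def by fastforce
      qed simp
      finally show ?thesis .
    qed
    have i1: "set_integrable P S (\<lambda>\<xi>. B \<xi> *v Ysol S x \<xi>)" by (rule BY_int[OF S])
    have i2: "set_integrable P S (\<lambda>\<xi>. B \<xi> *v Ysol S x' \<xi>)" by (rule BY_int[OF S])
    have iD: "set_integrable P S D" unfolding D_def using i1 i2 by (rule set_integral_diff(1))
    have iN: "set_integrable P S (\<lambda>\<xi>. norm (D \<xi>))"
      using integrable_norm[OF iD[unfolded set_integrable_def]] unfolding set_integrable_def by simp
    have eq: "Fop S x - Fop S x' = A *v d + (LINT \<xi>:S|P. D \<xi>)"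
      unfolding Fop_def D_def d_def set_integral_diff(2)[OF i1 i2]
      by (simp add: matrix_vector_mult_diff_distrib algebra_simps)
    have "norm (LINT \<xi>:S|P. D \<xi>) \<le> (LINT \<xi>:S|P. norm (D \<xi>))" by (rule set_integral_norm_bound[OF iD])
    also have "\<dots> \<le> (LINT \<xi>:S|P. K * norm d)"
      by (rule set_integral_mono[OF iN set_const(1)[OF SP] pw])
    also have "\<dots> = measure P S * (K * norm d)" by (rule set_const(2)[OF SP])
    also have "\<dots> \<le> K * norm d" using K0 by (intro mult_left_le_one_le) auto
    finally have hI: "norm (LINT \<xi>:S|P. D \<xi>) \<le> K * norm d" .
    have "norm (Fop S x - Fop S x') \<le> norm (A *v d) + norm (LINT \<xi>:S|P. D \<xi>)"
      unfolding eq by (rule norm_triangle_ineq)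
    also have "\<dots> \<le> mn A * norm d + K * norm d" using norm_mv_le[of A d] hI by linarith
    finally show ?thesis unfolding d_def by (simp add: algebra_simps)
  qed
  then show ?thesis by blast
qed

lemma Fop_mono:
  assumes S: "compact S" "S \<subseteq> msupport P"
  shows "cst * (norm (x - x'))\<^sup>2 \<le> (x - x') \<bullet> (Fop S x - Fop S x')"
proof -
  have SP: "S \<in> sets P" using borel_compact[OF S(1)] by (simp add: sets_P)
  have "Fop S x - Fop S x' = A *v (x - x') + ((LINT \<xi>:S|P. B \<xi> *v Ysol S x \<xi>) - (LINT \<xi>:S|P. B \<xi> *v Ysol S x' \<xi>))"
    by (simp add: Fop_def matrix_vector_mult_diff_distrib algebra_simps)
  moreover have "cst * (norm (x - x'))\<^sup>2 \<le> (x - x') \<bullet> (A *v (x - x') + ((LINT \<xi>:S|P. B \<xi> *v Ysol S x \<xi>) - (LINT \<xi>:S|P. B \<xi> *v Ysol S x' \<xi>)))"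
    by (rule lower[OF SP S(2) BY_int[OF S] BY_int[OF S]]) (auto intro!: AE_I2 Ysol_lcp[OF S(2)])
  ultimately show ?thesis by simp
qed

lemma slcp_sol_alt:
  "slcp_sol P S A B M N q1 q2 x y \<longleftrightarrow>
     y \<in> borel_measurable P \<and> set_integrable P S (\<lambda>\<xi>. B \<xi> *v y \<xi>) \<and>
     lcpv x (A *v x + (LINT \<xi>:S|P. B \<xi> *v y \<xi>) + q1) \<and>
     (AE \<xi> in P. \<xi> \<in> S \<longrightarrow> lcp2 (M \<xi>) (N \<xi> *v x + q2 \<xi>) (y \<xi>))"
  unfolding slcp_sol_def lcpv_def lcp2_def by (simp add: add.assoc)

lemma trunc_exists:
  assumes S: "compact S" "S \<subseteq> msupport P"
  shows "\<exists>x. slcp_sol P S A B M N q1 q2 x (Ysol S x)"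
proof -
  obtain L where L: "\<And>x x'. norm (Fop S x - Fop S x') \<le> L * norm (x - x')" using Fop_lip[OF S] by blast
  obtain x where x: "lcpv x (Fop S x)" using lcp_exists[OF cst_pos Fop_mono[OF S] L] by blast
  have "slcp_sol P S A B M N q1 q2 x (Ysol S x)"
    unfolding slcp_sol_alt
    using Ysol_meas[OF compact_imp_closed[OF S(1)] S(2)] BY_int[OF S] x
    by (auto simp: Fop_def intro!: AE_I2 Ysol_lcp[OF S(2)])
  then show ?thesis ..
qed

lemma trunc_unique:
  assumes S: "S \<in> sets P" "S \<subseteq> msupport P"
    and s1: "slcp_sol P S A B M N q1 q2 x y" and s2: "slcp_sol P S A B M N q1 q2 x' y'"
  shows "x' = x \<and> (AE \<xi> in P. \<xi> \<in> S \<longrightarrow> y' \<xi> = y \<xi>)"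
proof -
  note a1 = s1[unfolded slcp_sol_alt] and a2 = s2[unfolded slcp_sol_alt]
  have "cst * (norm (x' - x))\<^sup>2 \<le> (x' - x) \<bullet> (A *v (x' - x) + ((LINT \<xi>:S|P. B \<xi> *v y' \<xi>) - (LINT \<xi>:S|P. B \<xi> *v y \<xi>)))"
    by (rule lower[OF S]) (use a1 a2 in auto)
  also have "A *v (x' - x) + ((LINT \<xi>:S|P. B \<xi> *v y' \<xi>) - (LINT \<xi>:S|P. B \<xi> *v y \<xi>))
      = (A *v x' + (LINT \<xi>:S|P. B \<xi> *v y' \<xi>) + q1) - (A *v x + (LINT \<xi>:S|P. B \<xi> *v y \<xi>) + q1)"
    by (simp add: matrix_vector_mult_diff_distrib algebra_simps)
  also have "(x' - x) \<bullet> \<dots> \<le> 0" using lcpv_ineq a1 a2 by blast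
  finally have "cst * (norm (x' - x))\<^sup>2 \<le> 0" .
  then have xx: "x' = x" using cst_pos by (simp add: mult_le_0_iff)
  have e1: "AE \<xi> in P. \<xi> \<in> S \<longrightarrow> lcp2 (M \<xi>) (N \<xi> *v x + q2 \<xi>) (y \<xi>)" using a1 by blast
  have e2: "AE \<xi> in P. \<xi> \<in> S \<longrightarrow> lcp2 (M \<xi>) (N \<xi> *v x' + q2 \<xi>) (y' \<xi>)" using a2 by blast
  have "AE \<xi> in P. \<xi> \<in> S \<longrightarrow> y' \<xi> = y \<xi>"
    using e1 e2
  proof eventually_elim
    case (elim \<xi>)
    show ?case
    proof
      assume \<xi>: "\<xi> \<in> S"
      have pd: "pdm (\<kappa> \<xi>) (M \<xi>)" using \<xi> S pdm_support by blast
      show "y' \<xi> = y \<xi>"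
        using sol2_unique[OF kappa_pos pd] elim \<xi> xx by metis
    qed
  qed
  with xx show ?thesis by blast
qed

end


lemma mm_lzero: "(0::real^'a^'b) ** (X::real^'c^'a) = 0"
  by (simp add: matrix_matrix_mult_def vec_eq_iff)

lemma bl_mv_left: "bounded_linear (\<lambda>X::real^'n^'m. X *v v)"
proof -
  have "linear (\<lambda>X::real^'n^'m. X *v v)"
    by (rule linearI) (simp_all add: matrix_vector_mult_add_rdistrib scaleR_matrix_vector_assoc)
  then show ?thesis using linear_conv_bounded_linear by blast
qed

lemma mv_onorm: "norm (X *v v) \<le> mat_norm2 X * norm v"
  unfolding mat_norm2_def using onorm[OF matrix_vector_mul_bounded_linear[of X]] by simp

context setting
begin

interpretation prob_space P by (rule P)

lemma tail_bound:
  assumes sol: "slcp_sol P (msupport P) A B M N q1 q2 xs ys"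
    and S: "S \<in> sets P" "S \<subseteq> msupport P"
    and tN: "\<And>J. mat_norm2 (LINT \<xi>:(msupport P - S)|P. B \<xi> ** UJ (J \<xi>) (M \<xi>) ** N \<xi>) \<le> \<epsilon>"
    and tq: "\<And>J. norm (LINT \<xi>:(msupport P - S)|P. B \<xi> *v (UJ (J \<xi>) (M \<xi>) *v q2 \<xi>)) \<le> \<epsilon>"
  shows "norm (LINT \<xi>:(msupport P - S)|P. B \<xi> *v ys \<xi>) \<le> \<epsilon> * (norm xs + 1)"
proof -
  define Sg where "Sg = msupport P"
  define T where "T = Sg - S"
  have Sg: "Sg \<in> sets P" unfolding Sg_def by (rule Sigma_sets)
  have T: "T \<in> sets P" "T \<subseteq> Sg" using Sg S unfolding T_def by auto
  note a = sol[unfolded slcp_sol_alt, folded Sg_def]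
  have ysm: "ys \<in> borel_measurable P" using a by blast
  have iSg: "set_integrable P Sg (\<lambda>\<xi>. B \<xi> *v ys \<xi>)" using a by blast
  have aS: "AE \<xi> in P. \<xi> \<in> Sg \<longrightarrow> lcp2 (M \<xi>) (N \<xi> *v xs + q2 \<xi>) (ys \<xi>)" using a by blast
  define Js where "Js \<xi> = {j. 0 < ys \<xi> $ j}" for \<xi>
  define f where "f \<xi> = B \<xi> ** UJ (Js \<xi>) (M \<xi>) ** N \<xi>" for \<xi>
  define g where "g \<xi> = B \<xi> *v (UJ (Js \<xi>) (M \<xi>) *v q2 \<xi>)" for \<xi>
  define F where "F \<xi> = indicator Sg \<xi> *\<^sub>R f \<xi>" for \<xi>
  define G where "G \<xi> = indicator Sg \<xi> *\<^sub>R g \<xi>" for \<xi>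
  have ysj[measurable]: "(\<lambda>\<xi>. ys \<xi> $ j) \<in> borel_measurable P" for j
    using measurable_compose[OF ysm borel_measurable_nth] .
  have Jsm: "Js \<in> measurable P (count_space UNIV)"
    unfolding measurable_count_space_eq2_countable
  proof (intro conjI ballI)
    fix J0 :: "'m set"
    have "Js -` {J0} \<inter> space P = {\<xi> \<in> space P. \<forall>j. (0 < ys \<xi> $ j) = (j \<in> J0)}"
      by (auto simp: Js_def)
    also have "\<dots> \<in> sets P" by measurable
    finally show "Js -` {J0} \<inter> space P \<in> sets P" .
  qed auto
  have clSg: "closed Sg" unfolding Sg_def by (rule msupport_closed)
  have Fm[measurable]: "F \<in> borel_measurable P"
  proof -
    have "(\<lambda>\<xi>. (\<lambda>J0 \<xi>. indicator Sg \<xi> *\<^sub>R (B \<xi> ** UJ J0 (M \<xi>) ** N \<xi>)) (Js \<xi>) \<xi>) \<in> borel_measurable P"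
    proof (rule measurable_compose_countable[OF _ Jsm])
      fix J0 :: "'m set"
      show "(\<lambda>\<xi>. indicator Sg \<xi> *\<^sub>R (B \<xi> ** UJ J0 (M \<xi>) ** N \<xi>)) \<in> borel_measurable P"
        unfolding borel_P
        by (intro borel_measurable_continuous_on_indicator borel_closed clSg cont_mm
            continuous_on_subset[OF contB] continuous_on_subset[OF contN] UJ_mat_cont) (auto simp: Sg_def)
    qed
    then show ?thesis by (simp add: F_def[abs_def] f_def)
  qed
  have Gm[measurable]: "G \<in> borel_measurable P"
  proof -
    have "(\<lambda>\<xi>. (\<lambda>J0 \<xi>. indicator Sg \<xi> *\<^sub>R (B \<xi> *v (UJ J0 (M \<xi>) *v q2 \<xi>))) (Js \<xi>) \<xi>) \<in> borel_measurable P"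
    proof (rule measurable_compose_countable[OF _ Jsm])
      fix J0 :: "'m set"
      show "(\<lambda>\<xi>. indicator Sg \<xi> *\<^sub>R (B \<xi> *v (UJ J0 (M \<xi>) *v q2 \<xi>))) \<in> borel_measurable P"
        unfolding borel_P
        by (intro borel_measurable_continuous_on_indicator borel_closed clSg cont_mv cont_mm
            continuous_on_subset[OF contB] continuous_on_subset[OF contq2] UJ_mat_cont) (auto simp: Sg_def)
    qed
    then show ?thesis by (simp add: G_def[abs_def] g_def)
  qed
  define E where "E k = {\<xi> \<in> space P. \<xi> \<in> T \<and> norm (F \<xi>) \<le> real k \<and> norm (G \<xi>) \<le> real k}" for k :: nat
  have Em[measurable]: "E k \<in> sets P" for k
  proof -
    have [measurable]: "T \<in> sets P" by (rule T(1))
    show ?thesis unfolding E_def by measurable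
  qed
  have ET: "E k \<subseteq> T" for k unfolding E_def by auto
  have inc: "incseq E" unfolding incseq_def E_def by (auto intro: order_trans)
  have UE: "(\<Union>k. E k) = T"
  proof
    show "(\<Union>k. E k) \<subseteq> T" using ET by blast
    show "T \<subseteq> (\<Union>k. E k)"
    proof
      fix \<xi> assume "\<xi> \<in> T"
      obtain k :: nat where "max (norm (F \<xi>)) (norm (G \<xi>)) \<le> real k" using real_arch_simple by blast
      then have "\<xi> \<in> E k" using \<open>\<xi> \<in> T\<close> by (auto simp: E_def space_P)
      then show "\<xi> \<in> (\<Union>k. E k)" by blast
    qed
  qed
  have iT: "set_integrable P T (\<lambda>\<xi>. B \<xi> *v ys \<xi>)" by (rule set_integrable_subset[OF iSg T(1) T(2)])
  have lim: "(\<lambda>k. LINT \<xi>:(E k)|P. B \<xi> *v ys \<xi>) \<longlonglongrightarrow> (LINT \<xi>:T|P. B \<xi> *v ys \<xi>)"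
    using set_integral_cont_up[OF Em inc, of "\<lambda>\<xi>. B \<xi> *v ys \<xi>"] iT unfolding UE by simp
  have bnd: "norm (LINT \<xi>:(E k)|P. B \<xi> *v ys \<xi>) \<le> \<epsilon> * (norm xs + 1)" for k
  proof -
    define Jk where "Jk \<xi> = (if \<xi> \<in> E k then Js \<xi> else {})" for \<xi>
    have fE: "indicator T \<xi> *\<^sub>R (B \<xi> ** UJ (Jk \<xi>) (M \<xi>) ** N \<xi>) = indicator (E k) \<xi> *\<^sub>R F \<xi>" for \<xi>
    proof (cases "\<xi> \<in> E k")
      case True then show ?thesis using ET T(2) by (auto simp: Jk_def F_def f_def indicator_def)
    next
      case False then show ?thesis by (simp add: Jk_def UJ_empty mm_zero mm_lzero)
    qed
    have gE: "indicator T \<xi> *\<^sub>R (B \<xi> *v (UJ (Jk \<xi>) (M \<xi>) *v q2 \<xi>)) = indicator (E k) \<xi> *\<^sub>R G \<xi>" for \<xi>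
    proof (cases "\<xi> \<in> E k")
      case True then show ?thesis using ET T(2) by (auto simp: Jk_def G_def g_def indicator_def)
    next
      case False then show ?thesis by (simp add: Jk_def UJ_empty)
    qed
    have iF: "integrable P (\<lambda>\<xi>. indicator (E k) \<xi> *\<^sub>R F \<xi>)"
    proof (rule integrable_const_bound[where B="real k"])
      show "AE \<xi> in P. norm (indicator (E k) \<xi> *\<^sub>R F \<xi>) \<le> real k"
        by (intro AE_I2) (auto simp: E_def indicator_def)
    qed measurable
    have iG: "integrable P (\<lambda>\<xi>. indicator (E k) \<xi> *\<^sub>R G \<xi>)"
    proof (rule integrable_const_bound[where B="real k"])
      show "AE \<xi> in P. norm (indicator (E k) \<xi> *\<^sub>R G \<xi>) \<le> real k"
        by (intro AE_I2) (auto simp: E_def indicator_def)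
    qed measurable
    define IF where "IF = integral\<^sup>L P (\<lambda>\<xi>. indicator (E k) \<xi> *\<^sub>R F \<xi>)"
    define IG where "IG = integral\<^sup>L P (\<lambda>\<xi>. indicator (E k) \<xi> *\<^sub>R G \<xi>)"
    have nF: "mat_norm2 IF \<le> \<epsilon>"
      using tN[of Jk] unfolding IF_def set_lebesgue_integral_def T_def[symmetric] Sg_def[symmetric] fE .
    have nG: "norm IG \<le> \<epsilon>"
      using tq[of Jk] unfolding IG_def set_lebesgue_integral_def T_def[symmetric] Sg_def[symmetric] gE .
    have iE: "set_integrable P (E k) (\<lambda>\<xi>. B \<xi> *v ys \<xi>)"
      by (rule set_integrable_subset[OF iT Em ET])
    have ae: "AE \<xi> in P. indicator (E k) \<xi> *\<^sub>R (B \<xi> *v ys \<xi>)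
        = - ((indicator (E k) \<xi> *\<^sub>R F \<xi>) *v xs) - indicator (E k) \<xi> *\<^sub>R G \<xi>"
      using aS
    proof eventually_elim
      case (elim \<xi>)
      show ?case
      proof (cases "\<xi> \<in> E k")
        case True
        then have \<xi>: "\<xi> \<in> Sg" using ET T(2) by blast
        have pd: "pdm (\<kappa> \<xi>) (M \<xi>)" using \<xi> pdm_support unfolding Sg_def by blast
        have "ys \<xi> = - (UJ (Js \<xi>) (M \<xi>) *v (N \<xi> *v xs + q2 \<xi>))"
          unfolding Js_def by (rule lcp2_UJ[OF kappa_pos pd]) (use elim \<xi> in blast)
        then have "B \<xi> *v ys \<xi> = - (f \<xi> *v xs) - g \<xi>"
          by (simp add: f_def g_def mv_neg matrix_vector_right_distrib matrix_vector_mul_assoc matrix_vector_mult_diff_distrib matrix_mul_assoc)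
        then show ?thesis using True \<xi> by (simp add: F_def G_def)
      next
        case False then show ?thesis by simp
      qed
    qed
    have "(LINT \<xi>:(E k)|P. B \<xi> *v ys \<xi>)
        = integral\<^sup>L P (\<lambda>\<xi>. - ((indicator (E k) \<xi> *\<^sub>R F \<xi>) *v xs) - indicator (E k) \<xi> *\<^sub>R G \<xi>)"
      unfolding set_lebesgue_integral_def
    proof (rule integral_cong_AE[OF _ _ ae])
      show "(\<lambda>\<xi>. indicator (E k) \<xi> *\<^sub>R (B \<xi> *v ys \<xi>)) \<in> borel_measurable P"
        using iE unfolding set_integrable_def by (rule borel_measurable_integrable)
      show "(\<lambda>\<xi>. - ((indicator (E k) \<xi> *\<^sub>R F \<xi>) *v xs) - indicator (E k) \<xi> *\<^sub>R G \<xi>) \<in> borel_measurable P"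
        using integrable_bounded_linear[OF bl_mv_left iF] iG
        by (intro borel_measurable_integrable) auto
    qed
    also have "\<dots> = - (IF *v xs) - IG"
    proof -
      have i1: "integrable P (\<lambda>\<xi>. - ((indicator (E k) \<xi> *\<^sub>R F \<xi>) *v xs))"
        using integrable_bounded_linear[OF bl_mv_left iF] by auto
      have "integral\<^sup>L P (\<lambda>\<xi>. - ((indicator (E k) \<xi> *\<^sub>R F \<xi>) *v xs) - indicator (E k) \<xi> *\<^sub>R G \<xi>)
          = integral\<^sup>L P (\<lambda>\<xi>. - ((indicator (E k) \<xi> *\<^sub>R F \<xi>) *v xs)) - IG"
        unfolding IG_def by (rule Bochner_Integration.integral_diff[OF i1 iG])
      also have "integral\<^sup>L P (\<lambda>\<xi>. - ((indicator (E k) \<xi> *\<^sub>R F \<xi>) *v xs)) = - (IF *v xs)"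
        unfolding IF_def using integral_bounded_linear[OF bl_mv_left iF] by simp
      finally show ?thesis .
    qed
    finally have eqI: "(LINT \<xi>:(E k)|P. B \<xi> *v ys \<xi>) = - (IF *v xs) - IG" .
    have "norm (- (IF *v xs) - IG) \<le> norm (IF *v xs) + norm IG" using norm_triangle_ineq4[of "- (IF *v xs)" IG] by simp
    also have "\<dots> \<le> mat_norm2 IF * norm xs + norm IG" using mv_onorm[of IF xs] by simp
    also have "\<dots> \<le> \<epsilon> * norm xs + \<epsilon>" using nF nG by (intro add_mono mult_right_mono) auto
    finally show ?thesis unfolding eqI by (simp add: algebra_simps)
  qed
  have "norm (LINT \<xi>:T|P. B \<xi> *v ys \<xi>) \<le> \<epsilon> * (norm xs + 1)"
    using LIMSEQ_le_const2[OF tendsto_norm[OF lim]] bnd by blast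
  then show ?thesis unfolding T_def Sg_def .
qed

end


context setting
begin

interpretation prob_space P by (rule P)

lemma err_bound:
  assumes sol: "slcp_sol P (msupport P) A B M N q1 q2 xs ys"
    and S: "S \<in> sets P" "S \<subseteq> msupport P"
    and tail: "norm (LINT \<xi>:(msupport P - S)|P. B \<xi> *v ys \<xi>) \<le> \<epsilon> * (norm xs + 1)"
    and s: "slcp_sol P S A B M N q1 q2 x y"
  shows "norm (xs - x) \<le> (norm xs + 1) / cst * \<epsilon>"
proof -
  define Sg where "Sg = msupport P"
  define T where "T = Sg - S"
  have Sg: "Sg \<in> sets P" unfolding Sg_def by (rule Sigma_sets)
  note a = sol[unfolded slcp_sol_alt, folded Sg_def] and b = s[unfolded slcp_sol_alt]
  have iSg: "set_integrable P Sg (\<lambda>\<xi>. B \<xi> *v ys \<xi>)" using a by blast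
  have iS: "set_integrable P S (\<lambda>\<xi>. B \<xi> *v ys \<xi>)"
    by (rule set_integrable_subset[OF iSg S(1)]) (use S in \<open>simp add: Sg_def\<close>)
  have iT: "set_integrable P T (\<lambda>\<xi>. B \<xi> *v ys \<xi>)"
    by (rule set_integrable_subset[OF iSg]) (use Sg S in \<open>auto simp: T_def\<close>)
  have un: "Sg = S \<union> T" using S unfolding T_def Sg_def by auto
  have split: "(LINT \<xi>:Sg|P. B \<xi> *v ys \<xi>) = (LINT \<xi>:S|P. B \<xi> *v ys \<xi>) + (LINT \<xi>:T|P. B \<xi> *v ys \<xi>)"
    unfolding un by (rule set_integral_Un[OF _ iS iT]) (auto simp: T_def)
  have aS: "AE \<xi> in P. \<xi> \<in> S \<longrightarrow> lcp2 (M \<xi>) (N \<xi> *v xs + q2 \<xi>) (ys \<xi>)"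
    using a S(2) unfolding Sg_def by (auto elim!: AE_mp)
  define z where "z = xs - x"
  define IT where "IT = (LINT \<xi>:T|P. B \<xi> *v ys \<xi>)"
  have low: "cst * (norm z)\<^sup>2 \<le> z \<bullet> (A *v z + ((LINT \<xi>:S|P. B \<xi> *v ys \<xi>) - (LINT \<xi>:S|P. B \<xi> *v y \<xi>)))"
    unfolding z_def by (rule lower[OF S iS]) (use b aS in auto)
  define W where "W = (A *v xs + (LINT \<xi>:Sg|P. B \<xi> *v ys \<xi>) + q1) - (A *v x + (LINT \<xi>:S|P. B \<xi> *v y \<xi>) + q1)"
  have eqv: "A *v z + ((LINT \<xi>:S|P. B \<xi> *v ys \<xi>) - (LINT \<xi>:S|P. B \<xi> *v y \<xi>)) = W - IT"
    unfolding W_def split IT_def z_def by (simp add: matrix_vector_mult_diff_distrib algebra_simps)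
  have "z \<bullet> (A *v z + ((LINT \<xi>:S|P. B \<xi> *v ys \<xi>) - (LINT \<xi>:S|P. B \<xi> *v y \<xi>))) = z \<bullet> W - z \<bullet> IT"
    unfolding eqv by (rule inner_diff_right)
  also have "z \<bullet> W \<le> 0"
    unfolding z_def W_def using lcpv_ineq a b by blast
  finally have "cst * (norm z)\<^sup>2 \<le> - (z \<bullet> IT)" using low by linarith
  also have "\<dots> \<le> norm z * norm IT" using Cauchy_Schwarz_ineq2[of z IT] by (simp add: abs_le_iff)
  also have "\<dots> \<le> norm z * (\<epsilon> * (norm xs + 1))"
    using tail unfolding IT_def T_def Sg_def by (intro mult_left_mono) auto
  finally have h: "norm z * (cst * norm z) \<le> norm z * (\<epsilon> * (norm xs + 1))"
    by (simp add: power2_eq_square mult.commute mult.left_commute)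
  have "cst * norm z \<le> \<epsilon> * (norm xs + 1)"
  proof (cases "z = 0")
    case True
    have "0 \<le> \<epsilon> * (norm xs + 1)" using tail by (meson norm_ge_zero order_trans)
    then show ?thesis using True by simp
  next
    case False then show ?thesis using h by simp
  qed
  then have "norm z \<le> \<epsilon> * (norm xs + 1) / cst" using cst_pos by (simp add: pos_le_divide_eq mult.commute)
  then show ?thesis unfolding z_def by (simp add: field_simps)
qed

end

theorem proposition2p2:
  fixes P :: "(real^'l) measure"
    and A :: "real^'n^'n" and q1 :: "real^'n"
    and B :: "real^'l \<Rightarrow> real^'m^'n"
    and M :: "real^'l \<Rightarrow> real^'m^'m"
    and N :: "real^'l \<Rightarrow> real^'n^'m"
    and q2 :: "real^'l \<Rightarrow> real^'m"
    and \<kappa> :: "real^'l \<Rightarrow> real"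
    and xs :: "real^'n" and ys :: "real^'l \<Rightarrow> real^'m"
    and Xi :: "real \<Rightarrow> (real^'l) set"
  assumes P: "prob_space P" and sets_P: "sets P = sets borel"
    and contB: "continuous_on UNIV B" and contM: "continuous_on UNIV M"
    and contN: "continuous_on UNIV N" and contq2: "continuous_on UNIV q2"
    and kappa_cont: "continuous_on UNIV \<kappa>"
    and kappa_pos: "\<And>\<xi>. \<kappa> \<xi> > 0"
    and kappa_int: "integrable P \<kappa>"
    and mono: "AE \<xi> in P. \<forall>z u.
        z \<bullet> (A *v z + B \<xi> *v u) + u \<bullet> (N \<xi> *v z + M \<xi> *v u)
          \<ge> \<kappa> \<xi> * (norm z ^ 2 + norm u ^ 2)"
    and sol: "slcp_sol P (msupport P) A B M N q1 q2 xs ys"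
    and Xi_compact: "\<And>\<epsilon>. \<epsilon> > 0 \<Longrightarrow> compact (Xi \<epsilon>) \<and> Xi \<epsilon> \<subseteq> msupport P"
    and Xi_tailN: "\<And>\<epsilon> J. \<epsilon> > 0 \<Longrightarrow>
        mat_norm2 (LINT \<xi>:(msupport P - Xi \<epsilon>)|P. B \<xi> ** UJ (J \<xi>) (M \<xi>) ** N \<xi>) \<le> \<epsilon>"
    and Xi_tailq: "\<And>\<epsilon> J. \<epsilon> > 0 \<Longrightarrow>
        norm (LINT \<xi>:(msupport P - Xi \<epsilon>)|P. B \<xi> *v (UJ (J \<xi>) (M \<xi>) *v q2 \<xi>)) \<le> \<epsilon>"
  shows "\<exists>\<epsilon>0 > 0. \<exists>C > 0. \<forall>\<epsilon>. 0 < \<epsilon> \<and> \<epsilon> \<le> \<epsilon>0 \<longrightarrow>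
           (\<exists>x y. slcp_sol P (Xi \<epsilon>) A B M N q1 q2 x y \<and>
              (\<forall>x' y'. slcp_sol P (Xi \<epsilon>) A B M N q1 q2 x' y' \<longrightarrow>
                  x' = x \<and> (AE \<xi> in P. \<xi> \<in> Xi \<epsilon> \<longrightarrow> y' \<xi> = y \<xi>)) \<and>
              norm (xs - x) \<le> C * \<epsilon>)"
proof -
  have st: "setting P A B M N q2 \<kappa>"
    unfolding setting_def using P sets_P contB contM contN contq2 kappa_cont kappa_pos kappa_int mono by blast
  interpret setting P A q1 B M N q2 \<kappa> by (rule st)
  define C where "C = (norm xs + 1) / cst"
  have C0: "C > 0" unfolding C_def using cst_pos by (simp add: add_nonneg_pos)
  have main: "\<exists>x y. slcp_sol P (Xi \<epsilon>) A B M N q1 q2 x y \<and>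
              (\<forall>x' y'. slcp_sol P (Xi \<epsilon>) A B M N q1 q2 x' y' \<longrightarrow>
                  x' = x \<and> (AE \<xi> in P. \<xi> \<in> Xi \<epsilon> \<longrightarrow> y' \<xi> = y \<xi>)) \<and>
              norm (xs - x) \<le> C * \<epsilon>" if e: "0 < \<epsilon>" for \<epsilon>
  proof -
    have cS: "compact (Xi \<epsilon>)" and sS: "Xi \<epsilon> \<subseteq> msupport P" using Xi_compact[OF e] by auto
    have SP: "Xi \<epsilon> \<in> sets P" using borel_compact[OF cS] by (simp add: sets_P)
    obtain x where x: "slcp_sol P (Xi \<epsilon>) A B M N q1 q2 x (Ysol (Xi \<epsilon>) x)"
      using trunc_exists[OF cS sS] by blast
    have u: "\<forall>x' y'. slcp_sol P (Xi \<epsilon>) A B M N q1 q2 x' y' \<longrightarrow>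
                  x' = x \<and> (AE \<xi> in P. \<xi> \<in> Xi \<epsilon> \<longrightarrow> y' \<xi> = Ysol (Xi \<epsilon>) x \<xi>)"
      using trunc_unique[OF SP sS x] by blast
    have tb: "norm (LINT \<xi>:(msupport P - Xi \<epsilon>)|P. B \<xi> *v ys \<xi>) \<le> \<epsilon> * (norm xs + 1)"
      by (rule tail_bound[OF sol SP sS Xi_tailN[OF e] Xi_tailq[OF e]])
    have "norm (xs - x) \<le> C * \<epsilon>"
      unfolding C_def by (rule err_bound[OF sol SP sS tb x])
    with x u show ?thesis by blast
  qed
  show ?thesis
    by (rule exI[of _ 1], simp, rule exI[of _ C]) (use C0 main in auto)
qed


end
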